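(* Let $k\geq2$, $n>2\ell'_k$ and $p\in\{0,1,2\}^{[\![1,n]\!]^2}$. Let $\tau'_k=(\ell'_k,\ell'_k)$. Then $J^A(p,\ell'_k)\cap J^B(p,\ell'_k)=\varnothing$ and $$\tau'_k+I(p,\ell'_k)\subseteq J^A(p,\ell'_k)\sqcup J^B(p,\ell'_k).$$
   Context: Alphabet $\widetilde{\mathcal{A}}=\{0,1,2\}$. Let $(N_k)_{k\geq1}$ be integers with $N_k\geq4$, $\ell_0=2$, $\ell_k=N_k\ell_{k-1}$; let $N'_k\geq2$ be integers dividing $N_k$ with $N_k/N'_k\geq2$, and $\ell'_k=N'_k\ell_{k-1}$. Words: $a_0=01$, $b_0=02$; for odd $k\geq1$, $a_k=(a_{k-1})^{N_k}$ and $b_k=b_{k-1}2^{(N_k-2)\ell_{k-1}}b_{k-1}$; for even $k\geq2$, $a_k=a_{k-1}1^{(N_k-2)\ell_{k-1}}a_{k-1}$ and $b_k=(b_{k-1})^{N_k}$. $\widetilde L_k=\{a_k,1^{\ell_k},b_k,2^{\ell_k}\}$. For odd $k$: $\widetilde A'_k=\{(a_{k-1})^{N'_k},1^{\ell'_k}\}$, $\widetilde B'_k=\{b_{k-1}2^{(N'_k-1)\ell_{k-1}},\,2^{(N'_k-1)\ell_{k-1}}b_{k-1},\,2^{\ell'_k}\}$; for even $k$: $\widetilde A'_k=\{a_{k-1}1^{(N'_k-1)\ell_{k-1}},\,1^{(N'_k-1)\ell_{k-1}}a_{k-1},\,1^{\ell'_k}\}$, $\widetilde B'_k=\{(b_{k-1})^{N'_k},2^{\ell'_k}\}$.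 For a dictionary $L$ of words of length $\ell$, $\langle L\rangle=\{x\in\widetilde{\mathcal{A}}^{\mathbb{Z}}:\exists u\in[\![1,\ell]\!],\forall v\in\mathbb{Z},(\sigma^{u+\ell v}x)|_{[\![1,\ell]\!]}\in L\}$. $\widetilde X=\bigcap_{k\geq0}\langle\widetilde L_k\rangle$ and $\widetilde{\widetilde X}=\{x\in\widetilde{\mathcal{A}}^{\mathbb{Z}^2}:\exists\widetilde x\in\widetilde X,\ x(i,j)=\widetilde x(i)\ \forall(i,j)\}$ is its vertically aligned version; $\mathcal{L}(\widetilde{\widetilde X},m)$ denotes its patterns on $[\![1,m]\!]^2$. $\widetilde{\widetilde A}'_k$ (resp. $\widetilde{\widetilde B}'_k$) is the set of patterns $q\in\widetilde{\mathcal{A}}^{[\![1,\ell'_k]\!]^2}$ with $q(i,j)=\widetilde q(i)$ for some $\widetilde q\in\widetilde A'_k$ (resp. $\widetilde B'_k$). For $u\in\mathbb{Z}^2$, $\sigma^u(p)(v)=p(u+v)$. Define $I(p,\ell'_k)=\{u\in[\![0,n-2\ell'_k]\!]^2:(\sigma^u p)|_{[\![1,2\ell'_k]\!]^2}\in\mathcal{L}(\widetilde{\widetilde X},2\ell'_k)\}$, $I^A(p,\ell'_k)=\{u\in[\![0,n-\ell'_k]\!]^2:(\sigma^up)|_{[\![1,\ell'_k]\!]^2}\in\widetilde{\widetilde A}'_k\}$, $J^A(p,\ell'_k)=\bigcup_{u\in I^A(p,\ell'_k)}(u+[\![1,\ell'_k]\!]^2)$, and $I^B,J^B$ analogously with $\widetilde{\widetilde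 B}'_k$. *)

theory Defs
  imports Main
begin

text \<open>Alphabet {0,1,2} encoded as natural numbers. N and N' are the parameter sequences
(N k for k \<ge> 1).\<close>

fun ell :: "(nat \<Rightarrow> nat) \<Rightarrow> nat \<Rightarrow> nat" where
  "ell N 0 = 2"
| "ell N (Suc k) = N (Suc k) * ell N k"

definition ell' :: "(nat \<Rightarrow> nat) \<Rightarrow> (nat \<Rightarrow> nat) \<Rightarrow> nat \<Rightarrow> nat" where
  "ell' N N' k = N' k * ell N (k - 1)"

fun aw :: "(nat \<Rightarrow> nat) \<Rightarrow> nat \<Rightarrow> nat list" where
  "aw N 0 = [0, 1]"
| "aw N (Suc k) = (if odd (Suc k) then concat (replicate (N (Suc k)) (aw N k))
      else aw N k @ replicate ((N (Suc k) - 2) * ell N k) 1 @ aw N k)"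

fun bw :: "(nat \<Rightarrow> nat) \<Rightarrow> nat \<Rightarrow> nat list" where
  "bw N 0 = [0, 2]"
| "bw N (Suc k) = (if odd (Suc k)
      then bw N k @ replicate ((N (Suc k) - 2) * ell N k) 2 @ bw N k
      else concat (replicate (N (Suc k)) (bw N k)))"

definition Ldict :: "(nat \<Rightarrow> nat) \<Rightarrow> nat \<Rightarrow> nat list set" where
  "Ldict N k = {aw N k, replicate (ell N k) 1, bw N k, replicate (ell N k) 2}"

definition A'dict :: "(nat \<Rightarrow> nat) \<Rightarrow> (nat \<Rightarrow> nat) \<Rightarrow> nat \<Rightarrow> nat list set" where
  "A'dict N N' k = (if odd k
     then {concat (replicate (N' k) (aw N (k - 1))), replicate (ell' N N' k) 1}
     else {aw N (k - 1) @ replicate ((N' k - 1) * ell N (k - 1)) 1,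
           replicate ((N' k - 1) * ell N (k - 1)) 1 @ aw N (k - 1),
           replicate (ell' N N' k) 1})"

definition B'dict :: "(nat \<Rightarrow> nat) \<Rightarrow> (nat \<Rightarrow> nat) \<Rightarrow> nat \<Rightarrow> nat list set" where
  "B'dict N N' k = (if odd k
     then {bw N (k - 1) @ replicate ((N' k - 1) * ell N (k - 1)) 2,
           replicate ((N' k - 1) * ell N (k - 1)) 2 @ bw N (k - 1),
           replicate (ell' N N' k) 2}
     else {concat (replicate (N' k) (bw N (k - 1))), replicate (ell' N N' k) 2})"

text \<open>The word (\<sigma>^s x)|[1,l], i.e. x(s+1) ... x(s+l).\<close>
definition word_at :: "(int \<Rightarrow> nat) \<Rightarrow> int \<Rightarrow> nat \<Rightarrow> nat list" where
  "word_at x s l = map (\<lambda>i. x (s + int i + 1)) [0..<l]"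

definition gen :: "nat list set \<Rightarrow> nat \<Rightarrow> (int \<Rightarrow> nat) set" where
  "gen L l = {x. (\<forall>i. x i \<le> 2) \<and>
     (\<exists>u\<in>{1..int l}. \<forall>v::int. word_at x (u + int l * v) l \<in> L)}"

definition Xt :: "(nat \<Rightarrow> nat) \<Rightarrow> (int \<Rightarrow> nat) set" where
  "Xt N = (\<Inter>k. gen (Ldict N k) (ell N k))"

definition XXt :: "(nat \<Rightarrow> nat) \<Rightarrow> (int \<times> int \<Rightarrow> nat) set" where
  "XXt N = {x. \<exists>xt\<in>Xt N. \<forall>i j. x (i, j) = xt i}"

definition box :: "nat \<Rightarrow> (int \<times> int) set" where
  "box m = {1..int m} \<times> {1..int m}"

definition vadd :: "int \<times> int \<Rightarrow> int \<times> int \<Rightarrow> int \<times> int" where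
  "vadd u v = (fst u + fst v, snd u + snd v)"

definition shift2 :: "int \<times> int \<Rightarrow> (int \<times> int \<Rightarrow> nat) \<Rightarrow> (int \<times> int \<Rightarrow> nat)" where
  "shift2 u p = (\<lambda>v. p (vadd u v))"

definition in_lang :: "(nat \<Rightarrow> nat) \<Rightarrow> nat \<Rightarrow> (int \<times> int \<Rightarrow> nat) \<Rightarrow> bool" where
  "in_lang N m q = (\<exists>x\<in>XXt N. \<exists>u. \<forall>v\<in>box m. q v = x (vadd u v))"

definition in_aligned :: "nat list set \<Rightarrow> nat \<Rightarrow> (int \<times> int \<Rightarrow> nat) \<Rightarrow> bool" where
  "in_aligned D l q = (\<exists>w\<in>D. \<forall>v\<in>box l. q v = w ! nat (fst v - 1))"

definition Iset :: "(nat \<Rightarrow> nat) \<Rightarrow> nat \<Rightarrow> (int \<times> int \<Rightarrow> nat) \<Rightarrow> nat \<Rightarrow> (int \<times> int) set" where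
  "Iset N n p l = {u \<in> {0..int n - 2 * int l} \<times> {0..int n - 2 * int l}.
      in_lang N (2 * l) (shift2 u p)}"

definition IAset :: "(nat \<Rightarrow> nat) \<Rightarrow> (nat \<Rightarrow> nat) \<Rightarrow> nat \<Rightarrow> nat \<Rightarrow> (int \<times> int \<Rightarrow> nat) \<Rightarrow> (int \<times> int) set" where
  "IAset N N' k n p = {u \<in> {0..int n - int (ell' N N' k)} \<times> {0..int n - int (ell' N N' k)}.
      in_aligned (A'dict N N' k) (ell' N N' k) (shift2 u p)}"

definition IBset :: "(nat \<Rightarrow> nat) \<Rightarrow> (nat \<Rightarrow> nat) \<Rightarrow> nat \<Rightarrow> nat \<Rightarrow> (int \<times> int \<Rightarrow> nat) \<Rightarrow> (int \<times> int) set" where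
  "IBset N N' k n p = {u \<in> {0..int n - int (ell' N N' k)} \<times> {0..int n - int (ell' N N' k)}.
      in_aligned (B'dict N N' k) (ell' N N' k) (shift2 u p)}"

definition JAset :: "(nat \<Rightarrow> nat) \<Rightarrow> (nat \<Rightarrow> nat) \<Rightarrow> nat \<Rightarrow> nat \<Rightarrow> (int \<times> int \<Rightarrow> nat) \<Rightarrow> (int \<times> int) set" where
  "JAset N N' k n p = (\<Union>u\<in>IAset N N' k n p. vadd u ` box (ell' N N' k))"

definition JBset :: "(nat \<Rightarrow> nat) \<Rightarrow> (nat \<Rightarrow> nat) \<Rightarrow> nat \<Rightarrow> nat \<Rightarrow> (int \<times> int \<Rightarrow> nat) \<Rightarrow> (int \<times> int) set" where
  "JBset N N' k n p = (\<Union>u\<in>IBset N N' k n p. vadd u ` box (ell' N N' k))"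

end

theory Submission
  imports Defs
begin


definition okw :: "nat \<Rightarrow> nat list \<Rightarrow> bool" where
  "okw c w = (\<forall>i<length w. w!i = c \<or> (w!i = 0 \<and> Suc i < length w \<and> w!Suc i = c))"

lemma okw_append: "okw c u \<Longrightarrow> okw c v \<Longrightarrow> okw c (u @ v)"
  unfolding okw_def
proof (intro allI impI)
  fix i assume u: "\<forall>i<length u. u ! i = c \<or> u ! i = 0 \<and> Suc i < length u \<and> u ! Suc i = c"
    and v: "\<forall>i<length v. v ! i = c \<or> v ! i = 0 \<and> Suc i < length v \<and> v ! Suc i = c"
    and i: "i < length (u @ v)"
  show "(u @ v) ! i = c \<or> (u @ v) ! i = 0 \<and> Suc i < length (u @ v) \<and> (u @ v) ! Suc i = c"
  proof (cases "i < length u")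
    case True then show ?thesis using u[rule_format, OF True] by (auto simp: nth_append)
  next
    case False
    then have "i - length u < length v" using i by auto
    from v[rule_format, OF this] False show ?thesis
      by (auto simp: nth_append Suc_diff_le)
  qed
qed

lemma okw_rep: "okw c (replicate n c)" by (simp add: okw_def)

lemma okw_concat: "okw c u \<Longrightarrow> okw c (concat (replicate n u))"
proof (induction n)
  case 0 then show ?case by (simp add: okw_def)
next
  case (Suc n) then show ?case by (simp add: okw_append)
qed

lemma okw_aw: "okw 1 (aw N m)"
proof (induction m)
  case 0 show ?case by (auto simp: okw_def nth_Cons split: nat.splits)
next
  case (Suc m) then show ?case by (simp add: okw_append okw_concat okw_rep)
qed

lemma okw_bw: "okw 2 (bw N m)"
proof (induction m)
  case 0 show ?case by (auto simp: okw_def nth_Cons split: nat.splits)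
next
  case (Suc m) then show ?case by (simp add: okw_append okw_concat okw_rep)
qed

lemma ell_pos: assumes "\<forall>j\<ge>1. N j \<ge> 4" shows "ell N m > 0"
proof (induction m)
  case 0 show ?case by simp
next
  case (Suc m)
  have "N (Suc m) \<ge> 4" using assms by simp
  then show ?case using Suc by simp
qed

lemma len_concat_rep: "length (concat (replicate n x)) = n * length x"
  by (induction n) auto

lemma len_ab: assumes "\<forall>j\<ge>1. N j \<ge> 4"
  shows "length (aw N m) = ell N m \<and> length (bw N m) = ell N m"
proof (induction m)
  case 0 then show ?case by simp
next
  case (Suc m)
  have "N (Suc m) \<ge> 4" using assms by auto
  then have e: "ell N m + (N (Suc m) - 2) * ell N m + ell N m = N (Suc m) * ell N m"
    by (simp add: algebra_simps diff_mult_distrib)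
  show ?case using Suc e by (auto simp: len_concat_rep)
qed

lemma tdm: "take (length B) (drop (length A) (A @ B @ C)) = B" by simp

lemma win_conc: assumes "length x = L" "Nk = M * Np" "j < M"
  shows "take (Np*L) (drop (Np*L*j) (concat (replicate Nk x))) = concat (replicate Np x)"
proof -
  have "Np*j + Np \<le> Nk" using assms(2,3)
    by (metis Suc_leI add.commute mult.commute mult_Suc_right mult_le_mono2)
  then have "Nk = Np*j + Np + (Nk - Np*j - Np)" by simp
  then have "concat (replicate Nk x) = concat (replicate (Np*j) x) @ concat (replicate Np x) @ concat (replicate (Nk - Np*j - Np) x)"
    by (metis append.assoc concat_append replicate_add)
  moreover have "length (concat (replicate (Np*j) x)) = Np*L*j" "length (concat (replicate Np x)) = Np*L"
    using assms(1) by (auto simp: len_concat_rep)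
  ultimately show ?thesis by (metis tdm)
qed

lemma rep_mul: "replicate (a*L) c @ replicate (b*L) c = replicate ((a+b)*L) c"
  by (simp add: replicate_add[symmetric] add_mult_distrib)

lemma win_mid: assumes "length x = L" "Nk = M * Np" "Np \<ge> 2" "M \<ge> 2" "j < M"
  shows "take (Np*L) (drop (Np*L*j) (x @ replicate ((Nk-2)*L) c @ x))
    \<in> {x @ replicate ((Np-1)*L) c, replicate ((Np-1)*L) c @ x, replicate (Np*L) c}"
proof -
  have NkM: "Np * (M - 1) + Np = Nk" using assms(2,4) by (cases M) (auto simp: algebra_simps)
  consider "j = 0" | "j = M - 1" | "0 < j" "j < M - 1" using assms(5) by linarith
  then show ?thesis
  proof cases
    case 1
    have "(Nk - 2) = (Np - 1) + (Nk - Np - 1)" using NkM assms by (cases M; cases "M - 1"; auto)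
    then have "replicate ((Nk-2)*L) c = replicate ((Np-1)*L) c @ replicate ((Nk - Np - 1)*L) c"
      by (metis rep_mul)
    then have "x @ replicate ((Nk-2)*L) c @ x = [] @ (x @ replicate ((Np-1)*L) c) @ (replicate ((Nk - Np - 1)*L) c @ x)" by simp
    moreover have "length (x @ replicate ((Np-1)*L) c) = Np * L" using assms(1,3)
      by (simp add: diff_mult_distrib) 
    ultimately show ?thesis using 1 by (metis tdm list.size(3) mult_0_right insertI1)
  next
    case 2
    have "(Nk - 2) = (Nk - Np - 1) + (Np - 1)" using NkM assms by (cases M; cases "M - 1"; auto)
    then have "replicate ((Nk-2)*L) c = replicate ((Nk - Np - 1)*L) c @ replicate ((Np-1)*L) c"
      by (metis rep_mul)
    then have "x @ replicate ((Nk-2)*L) c @ x = (x @ replicate ((Nk - Np - 1)*L) c) @ (replicate ((Np-1)*L) c @ x) @ []" by simp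
    moreover have "length (replicate ((Np-1)*L) c @ x) = Np * L" using assms(1,3)
      by (simp add: diff_mult_distrib) 
    moreover have "length (x @ replicate ((Nk - Np - 1)*L) c) = Np*L*j"
    proof -
      have "1 + (Nk - Np - 1) = Np * j" using 2 NkM assms by (cases M; cases "M - 1"; auto simp: algebra_simps)
      then have "(1 + (Nk - Np - 1))*L = Np*j*L" by simp
      then show ?thesis using assms(1) by (simp add: algebra_simps)
    qed
    ultimately show ?thesis by (metis tdm insertI1 insertI2)
  next
    case 3
    have le: "Np*j + Np \<le> Np * (M - 1)" using 3
      by (metis Suc_leI add.commute mult.commute mult_Suc_right mult_le_mono2)
    have "Np * j \<ge> 1" using 3 assms(3) by simp
    then have "(Nk - 2) = (Np*j - 1) + Np + (Nk - Np*j - Np - 1)" using NkM le assms(3) by linarith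
    then have "replicate ((Nk-2)*L) c = replicate ((Np*j - 1)*L) c @ replicate (Np*L) c @ replicate ((Nk - Np*j - Np - 1)*L) c"
      by (metis rep_mul append.assoc)
    then have "x @ replicate ((Nk-2)*L) c @ x = (x @ replicate ((Np*j - 1)*L) c) @ replicate (Np*L) c @ (replicate ((Nk - Np*j - Np - 1)*L) c @ x)" by simp
    moreover have "length (x @ replicate ((Np*j - 1)*L) c) = Np*L*j"
    proof -
      have "(1 + (Np*j - 1))*L = Np*j*L" using \<open>Np*j \<ge> 1\<close> by simp
      then show ?thesis using assms(1) by (simp add: algebra_simps)
    qed
    ultimately show ?thesis by (metis tdm length_replicate insertI1 insertI2)
  qed
qed



lemma word_at_sub: assumes "i + l \<le> lk"
  shows "word_at x (s0 + int i) l = take l (drop i (word_at x s0 lk))"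
  using assms by (intro nth_equalityI) (auto simp: word_at_def algebra_simps)

lemma memb:
  assumes hN: "\<forall>j\<ge>1. N j \<ge> 4"
    and hN': "\<forall>j\<ge>1. N' j \<ge> 2 \<and> N' j dvd N j \<and> N j div N' j \<ge> 2"
    and hk: "k \<ge> 2" and w: "w \<in> Ldict N k" and j: "j < N k div N' k"
  shows "take (ell' N N' k) (drop (ell' N N' k * j) w) \<in> A'dict N N' k \<union> B'dict N N' k"
proof -
  obtain m where k: "k = Suc m" using hk by (cases k) auto
  define L where "L = ell N m"
  define M where "M = N k div N' k"
  define Np where "Np = N' k"
  have Np2: "Np \<ge> 2" and M2: "M \<ge> 2" and NkM: "N k = M * Np"
    using hN'[rule_format, of k] hk by (auto simp: M_def Np_def)
  have l': "ell' N N' k = Np * L" by (simp add: ell'_def Np_def L_def k)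
  have lk: "ell N k = N k * L" by (simp add: k L_def)
  have la: "length (aw N m) = L" and lb: "length (bw N m) = L" using len_ab[OF hN] by (auto simp: L_def)
  have jM: "j < M" using j by (simp add: M_def)
  have rep: "take (Np*L) (drop (Np*L*j) (replicate (N k * L) c)) = replicate (Np * L) c" for c
  proof -
    have "Np*j + Np \<le> N k" using NkM jM
      by (metis Suc_leI add.commute mult.commute mult_Suc_right mult_le_mono2)
    then have "Np*L*j + Np*L \<le> N k * L"
      by (metis add_mult_distrib mult.assoc mult.commute mult_le_mono1)
    then show ?thesis by simp
  qed
  have Nk2: "N k - 2 = N (Suc m) - 2" using k by simp
  show ?thesis
  proof (cases "odd k")
    case True
    then have ev: "even m" using k by simp
    have A: "A'dict N N' k = {concat (replicate Np (aw N m)), replicate (Np*L) 1}"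
      using True by (simp add: A'dict_def k Np_def ell'_def L_def)
    have B: "B'dict N N' k = {bw N m @ replicate ((Np - 1) * L) 2,
           replicate ((Np - 1) * L) 2 @ bw N m, replicate (Np*L) 2}"
      using True by (simp add: B'dict_def k Np_def ell'_def L_def)
    have "w = concat (replicate (N k) (aw N m)) \<or> w = replicate (N k * L) 1 \<or>
          w = bw N m @ replicate ((N k - 2) * L) 2 @ bw N m \<or> w = replicate (N k * L) 2"
      using w ev by (auto simp: Ldict_def k L_def)
    then show ?thesis
      using win_conc[OF la NkM jM] win_mid[OF lb NkM Np2 M2 jM, of 2] rep
      unfolding l' A B by auto
  next
    case False
    then have ev: "odd m" using k by simp
    have B: "B'dict N N' k = {concat (replicate Np (bw N m)), replicate (Np*L) 2}"
      using False by (simp add: B'dict_def k Np_def ell'_def L_def)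
    have A: "A'dict N N' k = {aw N m @ replicate ((Np - 1) * L) 1,
           replicate ((Np - 1) * L) 1 @ aw N m, replicate (Np*L) 1}"
      using False by (simp add: A'dict_def k Np_def ell'_def L_def)
    have "w = concat (replicate (N k) (bw N m)) \<or> w = replicate (N k * L) 1 \<or>
          w = aw N m @ replicate ((N k - 2) * L) 1 @ aw N m \<or> w = replicate (N k * L) 2"
      using w ev by (auto simp: Ldict_def k L_def)
    then show ?thesis
      using win_conc[OF lb NkM jM] win_mid[OF la NkM Np2 M2 jM, of 1] rep
      unfolding l' A B by auto
  qed
qed

lemma len_AB:
  assumes hN: "\<forall>j\<ge>1. N j \<ge> 4" and hk: "k \<ge> 1" and hN': "N' k \<ge> 1"
    and w: "w \<in> A'dict N N' k \<union> B'dict N N' k"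
  shows "length w = ell' N N' k"
proof -
  have la: "length (aw N (k-1)) = ell N (k-1)" and lb: "length (bw N (k-1)) = ell N (k-1)"
    using len_ab[OF hN] by auto
  have e: "ell N (k - 1) + (N' k - 1) * ell N (k - 1) = N' k * ell N (k-1)"
    using hN' by (cases "N' k") auto
  show ?thesis using w la lb e
    by (auto simp: A'dict_def B'dict_def ell'_def len_concat_rep split: if_splits)
qed

lemma okw_AB:
  shows "w \<in> A'dict N N' k \<Longrightarrow> okw 1 w" and "w \<in> B'dict N N' k \<Longrightarrow> okw 2 w"
  using okw_aw[of N "k-1"] okw_bw[of N "k-1"] okw_rep[of 1] okw_rep[of 2]
  by (auto simp: A'dict_def B'dict_def okw_append okw_concat split: if_splits)



lemma no_overlap:
  fixes f f' :: int
  assumes oA: "okw c A" and oB: "okw d B" and lA: "length A = l" and lB: "length B = l"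
    and cd: "c \<noteq> 0" "d \<noteq> 0" "c \<noteq> d" and ff: "f \<le> f'"
    and eq: "\<And>t. f < t \<Longrightarrow> t \<le> f + int l \<Longrightarrow> f' < t \<Longrightarrow> t \<le> f' + int l \<Longrightarrow>
              A ! nat (t - f - 1) = B ! nat (t - f' - 1)"
    and t: "f < t" "t \<le> f + int l" "f' < t" "t \<le> f' + int l"
  shows False
proof -
  define i where "i = nat (t - f - 1)"
  define j where "j = nat (t - f' - 1)"
  have i: "i < length A" and j: "j < length B" using t lA lB by (auto simp: i_def j_def)
  have Bd: "B ! j' = d \<or> B ! j' = 0" if "j' < length B" for j'
    using oB that by (auto simp: okw_def)
  have e: "A ! i = B ! j" using eq[OF t] by (simp add: i_def j_def)
  have "A ! i = c \<or> (A ! i = 0 \<and> Suc i < length A \<and> A ! Suc i = c)"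
    using oA i by (auto simp: okw_def)
  moreover have "A ! i \<noteq> c" using e Bd[OF j] cd by auto
  ultimately have si: "Suc i < length A" "A ! Suc i = c" by auto
  have t1: "f < t + 1" "t + 1 \<le> f + int l" "f' < t + 1" "t + 1 \<le> f' + int l"
    using t si lA ff by (auto simp: i_def)
  have "A ! nat (t + 1 - f - 1) = B ! nat (t + 1 - f' - 1)" using eq[OF t1] .
  moreover have "nat (t + 1 - f - 1) = Suc i" using t by (simp add: i_def)
  moreover have "nat (t + 1 - f' - 1) < length B" using t1 lB by auto
  ultimately have "B ! nat (t + 1 - f' - 1) = c" "B ! nat (t + 1 - f' - 1) = d \<or> B ! nat (t + 1 - f' - 1) = 0"
    using si Bd by auto
  then show False using cd by auto
qed



theorem lemma3p5:
  fixes N N' :: "nat \<Rightarrow> nat" and k n :: nat and p :: "int \<times> int \<Rightarrow> nat"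
  assumes hN: "\<forall>j\<ge>1. N j \<ge> 4"
    and hN': "\<forall>j\<ge>1. N' j \<ge> 2 \<and> N' j dvd N j \<and> N j div N' j \<ge> 2"
    and hk: "k \<ge> 2"
    and hn: "n > 2 * ell' N N' k"
    and hp: "\<forall>v\<in>box n. p v \<in> {0, 1, 2}"
  shows "JAset N N' k n p \<inter> JBset N N' k n p = {}
    \<and> vadd (int (ell' N N' k), int (ell' N N' k)) ` Iset N n p (ell' N N' k)
        \<subseteq> JAset N N' k n p \<union> JBset N N' k n p"
proof
  define l where "l = ell' N N' k"
  have Np2: "N' k \<ge> 2" using hN' hk by auto
  have lenw: "length w = l" if "w \<in> A'dict N N' k \<union> B'dict N N' k" for w
    using len_AB[OF hN _ _ that] hk Np2 by (simp add: l_def)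
  have eqp: "p (t, snd z) = w ! nat (t - fst u - 1)"
    if "\<forall>v\<in>box l. shift2 u p v = w ! nat (fst v - 1)" "fst u < t" "t \<le> fst u + int l"
       "e \<in> box l" "z = vadd u e" for t u w e z
  proof -
    have "(t - fst u, snd z - snd u) \<in> box l" using that(2-5) by (auto simp: box_def vadd_def)
    from that(1)[rule_format, OF this] show ?thesis by (simp add: shift2_def vadd_def)
  qed
  show "JAset N N' k n p \<inter> JBset N N' k n p = {}"
  proof (rule ccontr)
    assume "JAset N N' k n p \<inter> JBset N N' k n p \<noteq> {}"
    then obtain z where zA: "z \<in> JAset N N' k n p" and zB: "z \<in> JBset N N' k n p" by blast
    from zA obtain u e wA where u: "wA \<in> A'dict N N' k" "\<forall>v\<in>box l. shift2 u p v = wA ! nat (fst v - 1)"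
      and e: "e \<in> box l" "z = vadd u e"
      unfolding JAset_def IAset_def in_aligned_def l_def by blast
    from zB obtain u' e' wB where u': "wB \<in> B'dict N N' k" "\<forall>v\<in>box l. shift2 u' p v = wB ! nat (fst v - 1)"
      and e': "e' \<in> box l" "z = vadd u' e'"
      unfolding JBset_def IBset_def in_aligned_def l_def by blast
    have lA: "length wA = l" and lB: "length wB = l" using lenw u(1) u'(1) by auto
    have oA: "okw 1 wA" and oB: "okw 2 wB" using okw_AB u(1) u'(1) by auto
    have tz: "fst u < fst z" "fst z \<le> fst u + int l" "fst u' < fst z" "fst z \<le> fst u' + int l"
      using e e' by (auto simp: box_def vadd_def)
    have eq: "wA ! nat (t - fst u - 1) = wB ! nat (t - fst u' - 1)"
      if "fst u < t" "t \<le> fst u + int l" "fst u' < t" "t \<le> fst u' + int l" for t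
      using eqp[OF u(2) that(1,2) e] eqp[OF u'(2) that(3,4) e'] by simp
    show False
    proof (cases "fst u \<le> fst u'")
      case True
      show False
        by (rule no_overlap[OF oA oB lA lB _ _ _ True eq tz]) auto
    next
      case False
      then have F: "fst u' \<le> fst u" by simp
      show False
        by (rule no_overlap[OF oB oA lB lA _ _ _ F _ tz(3,4,1,2)]) (auto simp: eq)
    qed
  qed
  show "vadd (int (ell' N N' k), int (ell' N N' k)) ` Iset N n p (ell' N N' k)
        \<subseteq> JAset N N' k n p \<union> JBset N N' k n p"
  proof
    fix z assume "z \<in> vadd (int (ell' N N' k), int (ell' N N' k)) ` Iset N n p (ell' N N' k)"
    then obtain u where uI: "u \<in> Iset N n p l" and z: "z = vadd (int l, int l) u"
      by (auto simp: l_def)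
    from uI have ur: "u \<in> {0..int n - 2 * int l} \<times> {0..int n - 2 * int l}"
      and "in_lang N (2 * l) (shift2 u p)" by (auto simp: Iset_def)
    then obtain x u0 where x: "x \<in> XXt N" and xu: "\<forall>v\<in>box (2*l). shift2 u p v = x (vadd u0 v)"
      by (auto simp: in_lang_def)
    from x obtain xt where xt: "xt \<in> Xt N" and xx: "\<forall>i j. x (i, j) = xt i"
      by (auto simp: XXt_def)
    define lk where "lk = ell N k"
    from xt have "xt \<in> gen (Ldict N k) lk" by (auto simp: Xt_def lk_def)
    then obtain c where c: "\<forall>v::int. word_at xt (c + int lk * v) lk \<in> Ldict N k"
      by (auto simp: gen_def)
    obtain m where km: "k = Suc m" using hk by (cases k) auto
    define M where "M = N k div N' k"
    have NkM: "N k = M * N' k" using hN' hk by (auto simp: M_def)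
    have lkM: "lk = M * l"
    using NkM by (simp add: lk_def l_def ell'_def km)
    have lpos: "l > 0" using ell_pos[OF hN] Np2 by (simp add: l_def ell'_def)
    define a where "a = fst u0"
    define s where "s = (c - a) mod int l"
    have s0: "0 \<le> s" "s < int l" using lpos by (auto simp: s_def)
    define d where "d = a + s - c"
    have "d = - (int l * ((c - a) div int l))"
      using minus_mod_eq_mult_div[of "c-a" "int l"] by (simp add: d_def s_def)
    then have ld: "int l dvd d" by simp
    define v where "v = d div int lk"
    define r where "r = d mod int lk"
    have lkpos: "lk > 0" using ell_pos[OF hN] by (simp add: lk_def)
    have r0: "0 \<le> r" "r < int lk" using lkpos by (auto simp: r_def)
    have dvr: "d = int lk * v + r" by (simp add: v_def r_def)
    have "int l dvd int lk" using lkM by simp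
    then have "int l dvd r" using ld dvr by (metis dvd_add_right_iff dvd_mult2)
    then obtain j0 where j0: "r = int l * j0" by (auto elim: dvdE)
    have "j0 \<ge> 0" using j0 r0 lpos by (simp add: zero_le_mult_iff)
    define j where "j = nat j0"
    have rj: "r = int (l * j)" using j0 \<open>j0 \<ge> 0\<close> by (simp add: j_def)
    have jM: "j < M" using r0(2) rj lkM lpos by (simp add: mult.commute)
    have jl: "l * j + l \<le> lk" using jM lkM
      by (metis Suc_leI add.commute mult.commute mult_Suc_right mult_le_mono2)
    define w where "w = word_at xt (a + s) l"
    have "a + s = (c + int lk * v) + int (l * j)" using dvr rj d_def by simp
    then have "w = take l (drop (l * j) (word_at xt (c + int lk * v) lk))"
      unfolding w_def using word_at_sub[OF jl] by simp
    then have wAB: "w \<in> A'dict N N' k \<union> B'dict N N' k"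
      using memb[OF hN hN' hk c[rule_format, of v], of j] jM by (simp add: l_def M_def)
    define u' where "u' = vadd u (s, 0)"
    have u'r: "u' \<in> {0..int n - int l} \<times> {0..int n - int l}" using ur s0
      by (auto simp: u'_def vadd_def)
    have al: "\<forall>v\<in>box l. shift2 u' p v = w ! nat (fst v - 1)"
    proof
      fix v assume v: "v \<in> box l"
      then have "(s + fst v, snd v) \<in> box (2*l)" using s0 by (auto simp: box_def)
      from xu[rule_format, OF this] have "shift2 u' p v = xt (a + s + fst v)"
        by (simp add: shift2_def u'_def vadd_def xx a_def algebra_simps)
      moreover have "w ! nat (fst v - 1) = xt (a + s + fst v)"
        using v by (auto simp: w_def word_at_def box_def add.assoc)
      ultimately show "shift2 u' p v = w ! nat (fst v - 1)" by simp
    qed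
    have ze: "z = vadd u' (int l - s, int l)" and eb: "(int l - s, int l) \<in> box l"
      using z s0 lpos by (auto simp: u'_def vadd_def box_def)
    show "z \<in> JAset N N' k n p \<union> JBset N N' k n p"
      using wAB
    proof
      assume "w \<in> A'dict N N' k"
      then have "u' \<in> IAset N N' k n p" using u'r al by (auto simp: IAset_def in_aligned_def l_def)
      then show ?thesis using ze eb by (auto simp: JAset_def l_def)
    next
      assume "w \<in> B'dict N N' k"
      then have "u' \<in> IBset N N' k n p" using u'r al by (auto simp: IBset_def in_aligned_def l_def)
      then show ?thesis using ze eb by (auto simp: JBset_def l_def)
    qed
  qed
qed


end
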